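(* Let $\Sigma:\ \dot x=-(A-M)x+d$ be $\gamma$-robust for some $\gamma>0$ and let $u=(A-M)^{-1}\mathbb{1}$. Let $i\neq k$ with $(M)_{ik}=0$ and $m_{ik}>0$, and suppose $-(A-M-m_{ik}e_ie_k^{\mathrm T})$ is Hurwitz. Then $\bar u=(A-M-m_{ik}e_ie_k^{\mathrm T})^{-1}\mathbb{1}$ satisfies $$\bar u_i\ \ge\ u_i+\frac{m_{ik}}{a_i}u_k.$$
   Context: $A=\mathrm{diag}(a_1,\dots,a_N)$ with all $a_i>0$, $M\in\mathbb{R}^{N\times N}$ has zero diagonal and nonnegative off-diagonal entries; $e_i$ is the $i$th standard basis vector and $\mathbb{1}$ the all-ones vector. For $\gamma>0$, a system $\dot x=-(A-M)x+d$ is $\gamma$-robust if $-(A-M)$ is Hurwitz and for every bounded disturbance $d$, the solution with $x(0)=0$ satisfies $\max_{p}|x_p(t)|\le\gamma\max_p\sup_{s\ge0}|d_p(s)|$ for all $t\ge0$. *)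

theory Defs
  imports "HOL-Analysis.Analysis"
begin

definition hurwitz :: "real^'n^'n \<Rightarrow> bool" where
  "hurwitz B \<longleftrightarrow>
     (\<forall>(c::complex) (v::complex^'n). v \<noteq> 0 \<and> (map_matrix complex_of_real B) *v v = c *s v
        \<longrightarrow> Re c < 0)"

definition diag_mat :: "('n \<Rightarrow> real) \<Rightarrow> real^'n^'n" where
  "diag_mat a = (\<chi> i j. if i = j then a i else 0)"

definition elem_mat :: "'n \<Rightarrow> 'n \<Rightarrow> real \<Rightarrow> real^'n^'n" where
  "elem_mat i k m = (\<chi> p q. if p = i \<and> q = k then m else 0)"

definition is_solution :: "real^'n^'n \<Rightarrow> (real \<Rightarrow> real^'n) \<Rightarrow> (real \<Rightarrow> real^'n) \<Rightarrow> bool" where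
  "is_solution B d x \<longleftrightarrow> x 0 = 0 \<and>
     (\<forall>t\<ge>0. (x has_vector_derivative (B *v x t + d t)) (at t within {0..}))"

definition gamma_robust :: "real \<Rightarrow> real^'n^'n \<Rightarrow> real^'n^'n \<Rightarrow> bool" where
  "gamma_robust \<gamma> A M \<longleftrightarrow> hurwitz (-(A - M)) \<and>
     (\<forall>d x. continuous_on {0..} d \<and> bounded (d ` {0..}) \<and> is_solution (-(A - M)) d x \<longrightarrow>
        (\<forall>t\<ge>0. \<forall>p. \<bar>x t $ p\<bar> \<le> \<gamma> * (MAX q. (SUP s\<in>{0..}. \<bar>d s $ q\<bar>))))"

end

theory Submission
imports Defs begin

lemma inv_right:
  fixes A :: "real^'n^'n"
  assumes "invertible A"
  shows "A *v (matrix_inv A *v v) = v"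
proof -
  have "A ** matrix_inv A = mat 1 \<and> matrix_inv A ** A = mat 1"
    unfolding matrix_inv_def using assms unfolding invertible_def by (rule someI_ex)
  then show ?thesis by (metis matrix_vector_mul_assoc matrix_vector_mul_lid)
qed

lemma eig_contra:
  fixes B :: "real^'n::finite^'n"
  assumes h: "hurwitz (-B)" and x: "x \<noteq> 0" and e: "B *v x = \<mu> *s x" and mu: "\<mu> \<le> 0"
  shows False
proof -
  define v :: "complex^'n" where "v = (\<chi> j. complex_of_real (x$j))"
  have "v \<noteq> 0" using x unfolding v_def by (metis (mono_tags) vec_eq_iff vec_lambda_beta zero_index of_real_eq_0_iff)
  moreover have "map_matrix complex_of_real (-B) *v v = complex_of_real (-\<mu>) *s v"
  proof -
    have "(map_matrix complex_of_real (-B) *v v) $ p = (complex_of_real (-\<mu>) *s v) $ p" for p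
    proof -
      have "(map_matrix complex_of_real (-B) *v v) $ p = complex_of_real (- (B *v x) $ p)"
        by (simp add: matrix_vector_mult_def v_def sum_negf[symmetric])
      also have "\<dots> = (complex_of_real (-\<mu>) *s v) $ p" using e by (simp add: v_def vec_eq_iff)
      finally show ?thesis .
    qed
    then show ?thesis by (simp add: vec_eq_iff)
  qed
  ultimately have "Re (complex_of_real (-\<mu>)) < 0" using h unfolding hurwitz_def by blast
  then show False using mu by simp
qed

lemma nonneg_neg_contra:
  fixes B :: "real^'n::finite^'n"
  assumes Z: "\<And>p q. p \<noteq> q \<Longrightarrow> B$p$q \<le> 0"
    and h: "hurwitz (-B)" and w0: "\<And>j. w$j \<ge> 0" and wnz: "w \<noteq> 0"
    and Bw: "\<And>j. (B *v w)$j \<le> 0"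
  shows False
proof -
  define s :: real where "s = 1 + (\<Sum>j\<in>UNIV. \<bar>B$j$j\<bar>)"
  have sB: "B$j$j \<le> s" for j
  proof -
    have "\<bar>B$j$j\<bar> \<le> (\<Sum>j\<in>UNIV. \<bar>B$j$j\<bar>)" by (rule member_le_sum) auto
    then show ?thesis unfolding s_def by linarith
  qed
  have s0: "s > 0" unfolding s_def by (smt (verit) sum_nonneg abs_ge_zero)
  define P :: "real^'n^'n" where "P = (\<chi> p q. (if p = q then s else 0) - B$p$q)"
  have P0: "P$p$q \<ge> 0" for p q using sB[of p] Z[of p q] unfolding P_def by auto
  have Pv: "(P *v x)$j = s * x$j - (B *v x)$j" for x j
  proof -
    have "(P *v x)$j = (\<Sum>q\<in>UNIV. (if j = q then s else 0) * x$q) - (B *v x)$j"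
      by (simp add: P_def matrix_vector_mult_def sum_subtractf left_diff_distrib)
    also have "(\<Sum>q\<in>UNIV. (if j = q then s else 0) * x$q) = s * x$j"
    proof -
      have "\<And>q. (if j = q then s else 0) * x$q = (if j = q then s * x$q else 0)" by simp
      then show ?thesis by (simp only: sum.delta) simp
    qed
    finally show ?thesis .
  qed
  have Pmono: "(P *v x)$j \<ge> 0" if "\<And>q. x$q \<ge> 0" for x j
    unfolding matrix_vector_mult_def using P0 that by (simp add: sum_nonneg)
  define K where "K = {x::real^'n. (\<forall>j. x$j \<ge> 0) \<and> (\<Sum>j\<in>UNIV. x$j) = 1 \<and> (\<forall>j. (P *v x)$j \<ge> s * x$j)}"
  define \<sigma> where "\<sigma> x = (\<Sum>j\<in>UNIV. (P *v x)$j)" for x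
  have sig: "\<sigma> x \<ge> s" if "x \<in> K" for x
  proof -
    have "s = (\<Sum>j\<in>UNIV. s * x$j)" using that by (simp add: K_def sum_distrib_left[symmetric])
    also have "\<dots> \<le> \<sigma> x" unfolding \<sigma>_def using that by (intro sum_mono) (auto simp: K_def)
    finally show ?thesis .
  qed
  have linP: "P *v (c *\<^sub>R x + d *\<^sub>R y) = c *\<^sub>R (P *v x) + d *\<^sub>R (P *v y)" for c d x y
    by (simp add: matrix_vector_right_distrib matrix_vector_mult_scaleR)
  have contP: "continuous_on UNIV (\<lambda>x. (P *v x) $ j)" for j
    by (intro continuous_intros linear_continuous_on matrix_vector_mul_linear)
  have comp: "continuous_on UNIV (\<lambda>x::real^'n. x $ j)" for j
    by (intro continuous_intros)
  have "closed K"
  proof -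
    have "K = {x. \<forall>j. 0 \<le> x$j} \<inter> {x. (\<Sum>j\<in>UNIV. x$j) = 1} \<inter> {x. \<forall>j. s * x$j \<le> (P *v x)$j}"
      unfolding K_def by auto
    moreover have "closed {x::real^'n. \<forall>j. 0 \<le> x$j}"
      by (intro closed_Collect_all closed_Collect_le continuous_intros)
    moreover have "closed {x::real^'n. (\<Sum>j\<in>UNIV. x$j) = 1}"
      by (intro closed_Collect_eq continuous_intros)
    moreover have "closed {x::real^'n. \<forall>j. s * x$j \<le> (P *v x)$j}"
      by (intro closed_Collect_all closed_Collect_le continuous_intros contP)
    ultimately show ?thesis by auto
  qed
  moreover have "bounded K"
  proof -
    have "norm x \<le> 1" if "x \<in> K" for x
    proof -
      have "norm x \<le> (\<Sum>j\<in>UNIV. \<bar>x$j\<bar>)" by (rule norm_le_l1_cart)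
      also have "\<dots> = 1" using that by (simp add: K_def)
      finally show ?thesis .
    qed
    then show ?thesis unfolding bounded_iff by blast
  qed
  ultimately have cK: "compact K" by (simp add: compact_eq_bounded_closed)
  have vK: "convex K"
    unfolding convex_def
  proof (intro allI impI ballI)
    fix x y and u v :: real assume x: "x \<in> K" and y: "y \<in> K" and uv: "0 \<le> u" "0 \<le> v" "u + v = 1"
    have "(\<Sum>j\<in>UNIV. (u *\<^sub>R x + v *\<^sub>R y)$j) = u * (\<Sum>j\<in>UNIV. x$j) + v * (\<Sum>j\<in>UNIV. y$j)"
      by (simp add: sum.distrib sum_distrib_left)
    also have "\<dots> = 1" using x y uv by (simp add: K_def)
    finally have "(\<Sum>j\<in>UNIV. (u *\<^sub>R x + v *\<^sub>R y)$j) = 1" .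
    moreover have "(u *\<^sub>R x + v *\<^sub>R y)$j \<ge> 0" for j
      using x y uv by (auto simp: K_def intro!: add_nonneg_nonneg mult_nonneg_nonneg)
    moreover have "(P *v (u *\<^sub>R x + v *\<^sub>R y))$j \<ge> s * (u *\<^sub>R x + v *\<^sub>R y)$j" for j
    proof -
      have "u * (s * x$j) \<le> u * (P *v x)$j" "v * (s * y$j) \<le> v * (P *v y)$j"
        using x y uv by (auto simp: K_def intro!: mult_left_mono)
      then show ?thesis by (simp add: linP algebra_simps)
    qed
    ultimately show "u *\<^sub>R x + v *\<^sub>R y \<in> K" by (simp add: K_def)
  qed
  define w' where "w' = (1 / (\<Sum>j\<in>UNIV. w$j)) *\<^sub>R w"
  have sw: "(\<Sum>j\<in>UNIV. w$j) > 0"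
  proof -
    obtain j where "w$j \<noteq> 0" using wnz by (metis vec_eq_iff zero_index)
    then have "w$j > 0" using w0[of j] by auto
    moreover have "w$j \<le> (\<Sum>j\<in>UNIV. w$j)" by (rule member_le_sum) (auto simp: w0)
    ultimately show ?thesis by linarith
  qed
  have "w' \<in> K"
  proof -
    have "(\<Sum>j\<in>UNIV. w'$j) = 1" using sw by (simp add: w'_def sum_divide_distrib[symmetric])
    moreover have "w'$j \<ge> 0" for j using sw w0[of j] by (simp add: w'_def)
    moreover have "(P *v w')$j \<ge> s * w'$j" for j
    proof -
      have "(P *v w') = (1 / (\<Sum>j\<in>UNIV. w$j)) *\<^sub>R (P *v w)"
        unfolding w'_def by (simp add: matrix_vector_mult_scaleR)
      moreover have "s * w$j \<le> (P *v w)$j" using Pv[of w j] Bw[of j] by simp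
      ultimately show ?thesis using sw by (simp add: w'_def divide_right_mono mult.commute)
    qed
    ultimately show ?thesis by (simp add: K_def)
  qed
  then have ne: "K \<noteq> {}" by blast
  define f where "f x = (1 / \<sigma> x) *\<^sub>R (P *v x)" for x
  have contf: "continuous_on K f"
  proof -
    have cs: "continuous_on K \<sigma>" unfolding \<sigma>_def
      by (intro continuous_on_sum continuous_on_subset[OF contP]) auto
    have cP: "continuous_on K (\<lambda>x. P *v x)"
      by (intro linear_continuous_on_compose[OF continuous_on_id] matrix_vector_mul_linear)
    show ?thesis unfolding f_def
      using s0 sig by (intro continuous_intros cs cP) (smt (verit))
  qed
  have fK: "f \<in> K \<rightarrow> K"
  proof
    fix x assume x: "x \<in> K"
    have sp: "\<sigma> x > 0" using sig[OF x] s0 by linarith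
    have xn: "\<And>q. x$q \<ge> 0" using x by (simp add: K_def)
    have "(\<Sum>j\<in>UNIV. f x $ j) = 1" using sp by (simp add: f_def \<sigma>_def sum_divide_distrib[symmetric])
    moreover have "f x $ j \<ge> 0" for j using sp Pmono[OF xn, of j] by (simp add: f_def)
    moreover have "(P *v f x)$j \<ge> s * f x $ j" for j
    proof -
      have "P *v f x = (1 / \<sigma> x) *\<^sub>R (P *v (P *v x))" by (simp add: f_def matrix_vector_mult_scaleR)
      moreover have "(P *v (P *v x - s *\<^sub>R x))$j \<ge> 0"
        by (rule Pmono) (use x in \<open>auto simp: K_def\<close>)
      then have "s * (P *v x)$j \<le> (P *v (P *v x))$j"
        by (simp add: matrix_vector_mult_diff_distrib matrix_vector_mult_scaleR)
      ultimately show ?thesis using sp by (simp add: f_def divide_right_mono mult.commute)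
    qed
    ultimately show "f x \<in> K" by (simp add: K_def)
  qed
  obtain x where xK: "x \<in> K" and fx: "f x = x" using brouwer[OF cK vK ne contf fK] by blast
  have sp: "\<sigma> x > 0" using sig[OF xK] s0 by linarith
  have Px: "P *v x = \<sigma> x *s x"
  proof -
    have "\<sigma> x *\<^sub>R f x = P *v x" using sp by (simp add: f_def)
    then show ?thesis using fx by (simp add: scalar_mult_eq_scaleR)
  qed
  have "B *v x = (s - \<sigma> x) *s x"
  proof -
    have "(B *v x)$j = ((s - \<sigma> x) *s x)$j" for j using Pv[of x j] Px
      by (simp add: vec_eq_iff algebra_simps)
    then show ?thesis by (simp add: vec_eq_iff)
  qed
  moreover have "x \<noteq> 0" using xK by (auto simp: K_def)
  ultimately show False using eig_contra[OF h, of x "s - \<sigma> x"] sig[OF xK] by linarith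
qed

lemma Z_pos:
  fixes B :: "real^'n::finite^'n"
  assumes Z: "\<And>p q. p \<noteq> q \<Longrightarrow> B$p$q \<le> 0"
    and h: "hurwitz (-B)" and By: "\<And>j. (B *v y)$j \<ge> 0"
  shows "y$j \<ge> 0"
proof (rule ccontr)
  assume neg: "\<not> y$j \<ge> 0"
  define w where "w = (\<chi> l. max 0 (- y$l))"
  have w0: "\<And>l. w$l \<ge> 0" by (simp add: w_def)
  have "w$j \<noteq> 0" using neg by (simp add: w_def)
  then have wnz: "w \<noteq> 0" by auto
  have "(B *v w)$p \<le> 0" for p
  proof (cases "y$p < 0")
    case True
    have "(B *v w)$p = (\<Sum>l\<in>UNIV. B$p$l * w$l)" by (simp add: matrix_vector_mult_def)
    also have "\<dots> \<le> (\<Sum>l\<in>UNIV. - (B$p$l * y$l))"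
    proof (rule sum_mono)
      fix l
      show "B$p$l * w$l \<le> - (B$p$l * y$l)"
      proof (cases "l = p")
        case True then show ?thesis using \<open>y$p < 0\<close> by (simp add: w_def)
      next
        case False
        then have "B$p$l \<le> 0" by (rule Z[OF not_sym])
        then have "B$p$l * (w$l + y$l) \<le> 0"
          by (intro mult_nonpos_nonneg) (auto simp: w_def)
        then show ?thesis by (simp add: algebra_simps)
      qed
    qed
    also have "\<dots> = - (B *v y)$p" by (simp add: matrix_vector_mult_def sum_negf)
    also have "\<dots> \<le> 0" using By[of p] by simp
    finally show ?thesis .
  next
    case False
    have "(B *v w)$p = (\<Sum>l\<in>UNIV. B$p$l * w$l)" by (simp add: matrix_vector_mult_def)
    also have "\<dots> \<le> (\<Sum>l\<in>(UNIV::'n set). (0::real))"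
    proof (rule sum_mono)
      fix l
      show "B$p$l * w$l \<le> 0"
      proof (cases "l = p")
        case True then show ?thesis using False by (simp add: w_def)
      next
        case F: False
        then have "B$p$l \<le> 0" by (rule Z[OF not_sym])
        then show ?thesis using w0[of l] by (rule mult_nonpos_nonneg)
      qed
    qed
    finally show ?thesis by simp
  qed
  then show False using nonneg_neg_contra[OF Z h w0 wnz] by blast
qed

lemma Z_invertible:
  fixes B :: "real^'n::finite^'n"
  assumes Z: "\<And>p q. p \<noteq> q \<Longrightarrow> B$p$q \<le> 0" and h: "hurwitz (-B)"
  shows "invertible B"
proof -
  have "inj ((*v) B)"
  proof (rule injI)
    fix x y assume xy: "B *v x = B *v y"
    then have e: "B *v (x - y) = 0" by (simp add: matrix_vector_mult_diff_distrib)
    from xy have e': "B *v (y - x) = 0" by (simp add: matrix_vector_mult_diff_distrib)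
    have e1: "\<And>j. (B *v (x - y))$j \<ge> 0" using e by simp
    have e2: "\<And>j. (B *v (y - x))$j \<ge> 0" using e' by simp
    have "(x - y)$j \<ge> 0" for j by (rule Z_pos[OF Z h e1])
    moreover have "(y - x)$j \<ge> 0" for j by (rule Z_pos[OF Z h e2])
    ultimately show "x = y" by (metis vec_eq_iff order_antisym diff_ge_0_iff_ge vector_minus_component)
  qed
  then show ?thesis using matrix_left_invertible_injective invertible_left_inverse by blast
qed

theorem mainTheorem10:
  fixes a :: "'n::finite \<Rightarrow> real" and M :: "real^'n^'n" and \<gamma> m :: real and i k :: 'n
  assumes a_pos: "\<And>p. a p > 0"
    and M_diag: "\<And>p. M $ p $ p = 0"
    and M_nonneg: "\<And>p q. M $ p $ q \<ge> 0"
    and gamma_pos: "\<gamma> > 0"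
    and robust: "gamma_robust \<gamma> (diag_mat a) M"
    and ik: "i \<noteq> k" and Mik: "M $ i $ k = 0" and m_pos: "m > 0"
    and hurw: "hurwitz (-(diag_mat a - M - elem_mat i k m))"
  shows "let u = matrix_inv (diag_mat a - M) *v (\<chi> p. 1);
             ubar = matrix_inv (diag_mat a - M - elem_mat i k m) *v (\<chi> p. 1)
         in ubar $ i \<ge> u $ i + m / a i * u $ k"
proof -
  define B where "B = diag_mat a - M"
  define B' where "B' = diag_mat a - M - elem_mat i k m"
  define one :: "real^'n" where "one = (\<chi> p. 1)"
  define u where "u = matrix_inv B *v one"
  define ub where "ub = matrix_inv B' *v one"
  have ZB: "B$p$q \<le> 0" if "p \<noteq> q" for p q
    using that M_nonneg[of p q] by (simp add: B_def diag_mat_def)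
  have ZB': "B'$p$q \<le> 0" if "p \<noteq> q" for p q
    using that M_nonneg[of p q] m_pos Mik by (simp add: B'_def diag_mat_def elem_mat_def)
  have hB: "hurwitz (-B)" using robust by (simp add: gamma_robust_def B_def)
  have hB': "hurwitz (-B')" using hurw by (simp add: B'_def)
  have Bu: "B *v u = one" unfolding u_def by (rule inv_right[OF Z_invertible[OF ZB hB]])
  have Bub': "B' *v ub = one" unfolding ub_def by (rule inv_right[OF Z_invertible[OF ZB' hB']])
  have f1: "\<And>j. (B' *v ub)$j \<ge> 0" by (simp add: Bub' one_def)
  have ubk: "ub$k \<ge> 0" by (rule Z_pos[OF ZB' hB' f1])
  have Eub: "(elem_mat i k m *v ub) = (\<chi> p. if p = i then m * ub$k else 0)"
  proof -
    have "(elem_mat i k m *v ub)$p = (if p = i then m * ub$k else 0)" for p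
    proof -
      have "(elem_mat i k m *v ub)$p = (\<Sum>q\<in>UNIV. if q = k then (if p = i then m * ub$q else 0) else 0)"
        unfolding matrix_vector_mult_def elem_mat_def by (simp only: vec_lambda_beta, rule sum.cong) auto
      then show ?thesis by (simp only: sum.delta') simp
    qed
    then show ?thesis by (simp add: vec_eq_iff)
  qed
  define d where "d = ub - u"
  have Bd: "B *v d = (\<chi> p. if p = i then m * ub$k else 0)"
  proof -
    have "B = B' + elem_mat i k m" by (simp add: B_def B'_def)
    then have "B *v ub = one + (\<chi> p. if p = i then m * ub$k else 0)"
      by (simp add: matrix_vector_mult_add_rdistrib Bub' Eub)
    then show ?thesis by (simp add: d_def matrix_vector_mult_diff_distrib Bu)
  qed
  have f2: "\<And>j. (B *v d)$j \<ge> 0" using m_pos ubk by (simp add: Bd)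
  have d0: "d$j \<ge> 0" for j by (rule Z_pos[OF ZB hB f2])
  have "(B *v d)$i = a i * d$i - (\<Sum>l\<in>UNIV. M$i$l * d$l)"
  proof -
    have "(B *v d)$i = (\<Sum>l\<in>UNIV. (if i = l then a i * d$l else 0) - M$i$l * d$l)"
      unfolding matrix_vector_mult_def B_def diag_mat_def by (simp only: vec_lambda_beta, rule sum.cong) (auto simp: algebra_simps)
    then show ?thesis by (simp add: sum_subtractf)
  qed
  then have "a i * d$i = m * ub$k + (\<Sum>l\<in>UNIV. M$i$l * d$l)" using Bd by simp
  moreover have "(\<Sum>l\<in>UNIV. M$i$l * d$l) \<ge> 0" using M_nonneg d0 by (simp add: sum_nonneg)
  moreover have "ub$k = u$k + d$k" by (simp add: d_def)
  ultimately have "a i * d$i \<ge> m * u$k" using d0[of k] m_pos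
    by (smt (verit) mult_nonneg_nonneg distrib_left)
  then have "d$i \<ge> m / a i * u$k" using a_pos[of i]
    by (simp add: field_simps mult.commute)
  then show ?thesis unfolding Let_def by (simp add: d_def B_def B'_def u_def ub_def one_def)
qed
end
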